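(* Let $0<\lambda<\frac{5-\sqrt{21}}{2}$ and let $K$ be the attractor of the IFS $f_1(x)=\lambda x$, $f_2(x)=\lambda x+2\lambda$, $f_3(x)=\lambda x+3\lambda-\lambda^2$, $f_4(x)=\lambda x+1-\lambda$. Then $$\dim_H(U_2)=\dim_H\big(U_1\cap(U_1+1-\lambda)\big)=\dim_H(U_1),$$ where $U_1+1-\lambda=\{x+1-\lambda:x\in U_1\}$. Moreover, $U_1\cap(U_1+1-\lambda)$ is exactly the set of points of $K$ having a unique coding and whose unique coding begins with the digit $4$.
   Context: A coding of $x\in K$ is a sequence $(i_n)\in\{1,2,3,4\}^{\mathbb{N}}$ with $x=\lim_{n\to\infty}f_{i_1}\circ\cdots\circ f_{i_n}(0)$. $U_k$ denotes the set of $x\in K$ having exactly $k$ distinct codings. *)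

theory Defs
  imports "HOL-Analysis.Analysis"
begin

definition hausdorff_content :: "real \<Rightarrow> real \<Rightarrow> real set \<Rightarrow> ennreal" where
  "hausdorff_content s \<delta> A =
     (INF U \<in> {U :: nat \<Rightarrow> real set. A \<subseteq> (\<Union>n. U n) \<and> (\<forall>n. bounded (U n) \<and> diameter (U n) \<le> \<delta>)}.
        (\<Sum>n. ennreal (diameter (U n) powr s)))"

definition hausdorff_measure :: "real \<Rightarrow> real set \<Rightarrow> ennreal" where
  "hausdorff_measure s A = (SUP \<delta> \<in> {0<..}. hausdorff_content s \<delta> A)"

text \<open>Hausdorff dimension: inf of the s > 0 with H^s(A) = 0 (for subsets of the line this set
  contains every s > 1, so the infimum is a well-defined real number in [0,1]).\<close>
definition hausdorff_dim :: "real set \<Rightarrow> real" where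
  "hausdorff_dim A = Inf {s :: real. 0 < s \<and> hausdorff_measure s A = 0}"

text \<open>The maps f_1, ..., f_4 (the digit is the natural number i; only i in {1..4} is used).\<close>
definition ifs_map :: "real \<Rightarrow> nat \<Rightarrow> real \<Rightarrow> real" where
  "ifs_map lam i x =
     (if i = 1 then lam * x
      else if i = 2 then lam * x + 2 * lam
      else if i = 3 then lam * x + 3 * lam - lam ^ 2
      else lam * x + 1 - lam)"

definition attractor :: "real \<Rightarrow> real set" where
  "attractor lam = (THE K. compact K \<and> K \<noteq> {} \<and> K = (\<Union>i\<in>{1..4}. ifs_map lam i ` K))"

fun comp_prefix :: "real \<Rightarrow> (nat \<Rightarrow> nat) \<Rightarrow> nat \<Rightarrow> real \<Rightarrow> real" where
  "comp_prefix lam c 0 = id"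
| "comp_prefix lam c (Suc n) = comp_prefix lam c n \<circ> ifs_map lam (c n)"

definition is_coding :: "real \<Rightarrow> (nat \<Rightarrow> nat) \<Rightarrow> real \<Rightarrow> bool" where
  "is_coding lam c x \<longleftrightarrow> (\<forall>n. c n \<in> {1..4}) \<and> (\<lambda>n. comp_prefix lam c n 0) \<longlonglongrightarrow> x"

definition codings :: "real \<Rightarrow> real \<Rightarrow> (nat \<Rightarrow> nat) set" where
  "codings lam x = {c. is_coding lam c x}"

definition U :: "real \<Rightarrow> nat \<Rightarrow> real set" where
  "U lam k = {x \<in> attractor lam. finite (codings lam x) \<and> card (codings lam x) = k}"

end

theory Submission
  imports Defs
begin


lemma hc_le_hm: "0 < \<delta> \<Longrightarrow> hausdorff_content s \<delta> A \<le> hausdorff_measure s A"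
  unfolding hausdorff_measure_def by (rule SUP_upper) auto

lemma hm_zero_iff: "hausdorff_measure s A = 0 \<longleftrightarrow> (\<forall>\<delta>>0. hausdorff_content s \<delta> A = 0)"
proof
  assume "hausdorff_measure s A = 0"
  then show "\<forall>\<delta>>0. hausdorff_content s \<delta> A = 0"
    using hc_le_hm[of _ s A] by (metis le_zero_eq)
next
  assume "\<forall>\<delta>>0. hausdorff_content s \<delta> A = 0"
  then show "hausdorff_measure s A = 0"
    unfolding hausdorff_measure_def by (simp add: SUP_constant)
qed

lemma hc_zeroI:
  assumes "\<And>e. 0 < e \<Longrightarrow> \<exists>U. A \<subseteq> (\<Union>n. U n) \<and> (\<forall>n. bounded (U n) \<and> diameter (U n) \<le> \<delta>)
            \<and> (\<Sum>n. ennreal (diameter (U n) powr s)) \<le> ennreal e"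
  shows "hausdorff_content s \<delta> A = 0"
proof -
  have "hausdorff_content s \<delta> A \<le> 0"
  proof (rule ennreal_le_epsilon)
    fix e :: real assume "0 < e"
    then obtain U where U: "A \<subseteq> (\<Union>n. U n)" "\<forall>n. bounded (U n) \<and> diameter (U n) \<le> \<delta>"
      "(\<Sum>n. ennreal (diameter (U n) powr s)) \<le> ennreal e" using assms by blast
    have "hausdorff_content s \<delta> A \<le> (\<Sum>n. ennreal (diameter (U n) powr s))"
      unfolding hausdorff_content_def by (rule INF_lower) (use U in auto)
    then show "hausdorff_content s \<delta> A \<le> 0 + ennreal e" using U(3) by simp
  qed
  then show ?thesis by simp
qed

lemma hc_zeroD:
  assumes "hausdorff_content s \<delta> A = 0" "0 < e"
  shows "\<exists>U. A \<subseteq> (\<Union>n. U n) \<and> (\<forall>n. bounded (U n) \<and> diameter (U n) \<le> \<delta>)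
            \<and> (\<Sum>n. ennreal (diameter (U n) powr s)) < ennreal e"
proof -
  have "hausdorff_content s \<delta> A < ennreal e" using assms by simp
  then show ?thesis unfolding hausdorff_content_def INF_less_iff by auto
qed

lemma hm_mono: assumes "A \<subseteq> B" shows "hausdorff_measure s A \<le> hausdorff_measure s B"
  unfolding hausdorff_measure_def hausdorff_content_def
proof (rule SUP_mono)
  fix d :: real assume "d \<in> {0<..}"
  then show "\<exists>m\<in>{0<..}. (INF U \<in> {U :: nat \<Rightarrow> real set. A \<subseteq> (\<Union>n. U n) \<and> (\<forall>n. bounded (U n) \<and> diameter (U n) \<le> d)}.
        (\<Sum>n. ennreal (diameter (U n) powr s))) \<le> (INF U \<in> {U :: nat \<Rightarrow> real set. B \<subseteq> (\<Union>n. U n) \<and> (\<forall>n. bounded (U n) \<and> diameter (U n) \<le> m)}.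
        (\<Sum>n. ennreal (diameter (U n) powr s)))"
    using assms by (intro bexI[of _ d] INF_superset_mono) auto
qed

lemma hm_null_subset: "A \<subseteq> B \<Longrightarrow> hausdorff_measure s B = 0 \<Longrightarrow> hausdorff_measure s A = 0"
  using hm_mono[of A B s] by simp

lemma hm_affine_null:
  fixes a b s :: real
  assumes s: "0 < s" and a: "a \<noteq> 0" and A: "hausdorff_measure s A = 0"
  shows "hausdorff_measure s ((\<lambda>x. a*x+b) ` A) = 0"
  unfolding hm_zero_iff
proof (intro allI impI)
  fix \<delta> :: real assume d: "0 < \<delta>"
  have aa: "0 < \<bar>a\<bar>" using a by simp
  have h0: "hausdorff_content s (\<delta>/\<bar>a\<bar>) A = 0" using A d aa unfolding hm_zero_iff by simp
  have pa: "0 < \<bar>a\<bar> powr s" using aa by simp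
  show "hausdorff_content s \<delta> ((\<lambda>x. a*x+b) ` A) = 0"
  proof (rule hc_zeroI)
    fix e :: real assume e: "0 < e"
    have ep: "0 < e / \<bar>a\<bar> powr s" using e pa by simp
    obtain U where U: "A \<subseteq> (\<Union>n. U n)" "\<forall>n. bounded (U n) \<and> diameter (U n) \<le> \<delta>/\<bar>a\<bar>"
      "(\<Sum>n. ennreal (diameter (U n) powr s)) < ennreal (e / \<bar>a\<bar> powr s)"
      using hc_zeroD[OF h0 ep] by blast
    define V where "V n = (\<lambda>x. a*x+b) ` U n" for n
    have bV: "bounded (V n)" for n
    proof -
      have "V n = (\<lambda>x. b + x) ` ((\<lambda>x. a *\<^sub>R x) ` U n)"
        unfolding V_def image_image by (simp add: add.commute)
      then show ?thesis using U(2) bounded_scaling bounded_translation by metis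
    qed
    have dV: "diameter (V n) \<le> \<bar>a\<bar> * diameter (U n)" for n
    proof (rule diameter_le)
      show "V n \<noteq> {} \<or> 0 \<le> \<bar>a\<bar> * diameter (U n)" using U(2) diameter_ge_0[of "U n"] by simp
      fix x y assume "x \<in> V n" "y \<in> V n"
      then obtain u v where uv: "u \<in> U n" "v \<in> U n" "x = a * u + b" "y = a * v + b" unfolding V_def by auto
      have "norm (x - y) = \<bar>a\<bar> * dist u v" using uv by (simp add: dist_real_def abs_mult flip: right_diff_distrib)
      also have "\<dots> \<le> \<bar>a\<bar> * diameter (U n)"
        using diameter_bounded_bound[of "U n" u v] U(2) uv by (simp add: mult_left_mono)
      finally show "norm (x - y) \<le> \<bar>a\<bar> * diameter (U n)" .
    qed
    have dV2: "diameter (V n) \<le> \<delta>" for n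
    proof -
      have "diameter (U n) \<le> \<delta>/\<bar>a\<bar>" using U(2) by blast
      then have "\<bar>a\<bar> * diameter (U n) \<le> \<delta>" using aa by (simp add: pos_le_divide_eq mult.commute)
      then show ?thesis using dV[of n] by simp
    qed
    have pV: "diameter (V n) powr s \<le> \<bar>a\<bar> powr s * diameter (U n) powr s" for n
    proof -
      have "diameter (V n) powr s \<le> (\<bar>a\<bar> * diameter (U n)) powr s"
        using dV[of n] bV diameter_ge_0 s by (intro powr_mono2) auto
      also have "\<dots> = \<bar>a\<bar> powr s * diameter (U n) powr s"
        using U(2) diameter_ge_0 by (simp add: powr_mult)
      finally show ?thesis .
    qed
    have le1: "ennreal (diameter (V n) powr s) \<le> ennreal (\<bar>a\<bar> powr s) * ennreal (diameter (U n) powr s)" for n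
    proof -
      have "ennreal (diameter (V n) powr s) \<le> ennreal (\<bar>a\<bar> powr s * diameter (U n) powr s)"
        using pV[of n] by (rule ennreal_leI)
      then show ?thesis by (simp add: ennreal_mult)
    qed
    have "(\<Sum>n. ennreal (diameter (V n) powr s)) \<le> (\<Sum>n. ennreal (\<bar>a\<bar> powr s) * ennreal (diameter (U n) powr s))"
      by (rule suminf_le[OF le1 summableI summableI])
    also have "\<dots> = ennreal (\<bar>a\<bar> powr s) * (\<Sum>n. ennreal (diameter (U n) powr s))" by simp
    also have "\<dots> \<le> ennreal (\<bar>a\<bar> powr s) * ennreal (e / \<bar>a\<bar> powr s)"
      using U(3) by (intro mult_left_mono less_imp_le) auto
    also have "\<dots> = ennreal e" using pa e by (simp flip: ennreal_mult)
    finally have "(\<Sum>n. ennreal (diameter (V n) powr s)) \<le> ennreal e" .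
    then show "\<exists>U. (\<lambda>x. a*x+b) ` A \<subseteq> (\<Union>n. U n) \<and> (\<forall>n. bounded (U n) \<and> diameter (U n) \<le> \<delta>)
            \<and> (\<Sum>n. ennreal (diameter (U n) powr s)) \<le> ennreal e"
    proof -
      have cov: "(\<lambda>x. a*x+b) ` A \<subseteq> (\<Union>n. V n)" using U(1) unfolding V_def by blast
      show ?thesis using cov bV dV2 \<open>(\<Sum>n. ennreal (diameter (V n) powr s)) \<le> ennreal e\<close>
        by (intro exI[of _ V]) blast
    qed
  qed
qed

lemma hm_UN_null:
  assumes A: "\<And>n::nat. hausdorff_measure s (A n) = 0"
  shows "hausdorff_measure s (\<Union>n. A n) = 0"
  unfolding hm_zero_iff
proof (intro allI impI)
  fix \<delta> :: real assume d: "0 < \<delta>"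
  show "hausdorff_content s \<delta> (\<Union>n. A n) = 0"
  proof (rule hc_zeroI)
    fix e :: real assume e: "0 < e"
    have "\<forall>n. \<exists>U. A n \<subseteq> (\<Union>k. U k) \<and> (\<forall>k. bounded (U k) \<and> diameter (U k) \<le> \<delta>)
            \<and> (\<Sum>k. ennreal (diameter (U k) powr s)) < ennreal (e * (1/2)^Suc n)"
      using A d e by (intro allI hc_zeroD) (auto simp: hm_zero_iff)
    then obtain U where U: "\<And>n. A n \<subseteq> (\<Union>k. U n k)" "\<And>n k. bounded (U n k) \<and> diameter (U n k) \<le> \<delta>"
       "\<And>n. (\<Sum>k. ennreal (diameter (U n k) powr s)) < ennreal (e * (1/2)^Suc n)"
      by metis
    define V where "V i = (case prod_decode i of (n,k) \<Rightarrow> U n k)" for i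
    define F where "F p = (case p of (n,k) \<Rightarrow> ennreal (diameter (U n k) powr s))" for p
    have cov: "(\<Union>n. A n) \<subseteq> (\<Union>i. V i)"
    proof
      fix x assume "x \<in> (\<Union>n. A n)"
      then obtain n k where "x \<in> U n k" using U(1) by blast
      then have "x \<in> V (prod_encode (n,k))" unfolding V_def by simp
      then show "x \<in> (\<Union>i. V i)" by blast
    qed
    have "(\<Sum>i. ennreal (diameter (V i) powr s)) = (\<Sum>i. F (prod_decode i))"
      unfolding V_def F_def by (simp add: case_prod_unfold)
    also have "\<dots> = (\<Sum>n. (\<Sum>k. F (n,k)))"
      by (rule suminf_ennreal_2dimen) simp
    also have "\<dots> \<le> (\<Sum>n. ennreal (e * (1/2)^Suc n))"
      using U(3) unfolding F_def by (intro suminf_le) (auto intro: less_imp_le)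
    also have "\<dots> = ennreal e"
      using e by (intro suminf_ennreal_eq) (auto intro: sums_mult[OF power_half_series, of e, simplified])
    finally show "\<exists>U. (\<Union>n. A n) \<subseteq> (\<Union>n. U n) \<and> (\<forall>n. bounded (U n) \<and> diameter (U n) \<le> \<delta>)
            \<and> (\<Sum>n. ennreal (diameter (U n) powr s)) \<le> ennreal e"
      using cov U(2) by (intro exI[of _ V]) (auto simp: V_def split: prod.split)
  qed
qed



definition tr :: "real \<Rightarrow> nat \<Rightarrow> real" where
  "tr lam i = (if i = 1 then 0 else if i = 2 then 2*lam else if i = 3 then 3*lam - lam^2 else 1 - lam)"

lemma f_eq: "ifs_map lam i x = lam*x + tr lam i"
  by (simp add: ifs_map_def tr_def)

lemma cp_diff: "comp_prefix lam c n x - comp_prefix lam c n y = lam^n * (x - y)"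
proof (induction n arbitrary: x y)
  case 0 then show ?case by simp
next
  case (Suc n)
  have "comp_prefix lam c (Suc n) x - comp_prefix lam c (Suc n) y
      = comp_prefix lam c n (ifs_map lam (c n) x) - comp_prefix lam c n (ifs_map lam (c n) y)" by simp
  also have "\<dots> = lam^n * (ifs_map lam (c n) x - ifs_map lam (c n) y)" by (rule Suc.IH)
  also have "\<dots> = lam^Suc n * (x - y)" by (simp add: f_eq algebra_simps)
  finally show ?case .
qed

lemma cp_Suc0: "comp_prefix lam c (Suc n) x = ifs_map lam (c 0) (comp_prefix lam (\<lambda>k. c (Suc k)) n x)"
  by (induction n arbitrary: x) auto

lemma all_nat_Suc: "(\<forall>n. P n) \<longleftrightarrow> P 0 \<and> (\<forall>n. P (Suc n))"
  by (metis not0_implies_Suc)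

lemma coding_cons_iff:
  assumes "lam \<noteq> 0"
  shows "is_coding lam c x \<longleftrightarrow> c 0 \<in> {1..4} \<and> (\<exists>y. is_coding lam (\<lambda>k. c (Suc k)) y \<and> x = ifs_map lam (c 0) y)"
proof -
  define p where "p n = comp_prefix lam (\<lambda>k. c (Suc k)) n 0" for n
  define t where "t = tr lam (c 0)"
  have sS: "comp_prefix lam c (Suc n) 0 = lam * p n + t" for n
    unfolding p_def t_def using cp_Suc0 f_eq by metis
  have "(\<lambda>n. comp_prefix lam c n 0) \<longlonglongrightarrow> x \<longleftrightarrow> (\<lambda>n. lam * p n + t) \<longlonglongrightarrow> x"
    proof -
    have sS': "(\<lambda>n. comp_prefix lam c (Suc n) 0) = (\<lambda>n. lam * p n + t)" by (rule ext, rule sS)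
    show ?thesis
    proof
      assume "(\<lambda>n. comp_prefix lam c n 0) \<longlonglongrightarrow> x"
      then have "(\<lambda>n. comp_prefix lam c (Suc n) 0) \<longlonglongrightarrow> x" by (rule LIMSEQ_Suc)
      then show "(\<lambda>n. lam * p n + t) \<longlonglongrightarrow> x" by (simp only: sS')
    next
      assume "(\<lambda>n. lam * p n + t) \<longlonglongrightarrow> x"
      then have "(\<lambda>n. comp_prefix lam c (Suc n) 0) \<longlonglongrightarrow> x" by (simp only: sS')
      then show "(\<lambda>n. comp_prefix lam c n 0) \<longlonglongrightarrow> x" by (rule LIMSEQ_imp_Suc)
    qed
  qed
  also have "\<dots> \<longleftrightarrow> (\<exists>y. p \<longlonglongrightarrow> y \<and> x = lam * y + t)"
  proof
    assume h: "(\<lambda>n. lam * p n + t) \<longlonglongrightarrow> x"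
    have "(\<lambda>n. ((lam * p n + t) - t) / lam) \<longlonglongrightarrow> (x - t) / lam"
      using assms by (intro tendsto_intros h) auto
    then have "p \<longlonglongrightarrow> (x - t)/lam" using assms by simp
    then show "\<exists>y. p \<longlonglongrightarrow> y \<and> x = lam * y + t" using assms by (intro exI[of _ "(x-t)/lam"]) auto
  next
    assume "\<exists>y. p \<longlonglongrightarrow> y \<and> x = lam * y + t"
    then obtain y where "p \<longlonglongrightarrow> y" "x = lam*y+t" by blast
    then show "(\<lambda>n. lam * p n + t) \<longlonglongrightarrow> x" by (auto intro!: tendsto_intros)
  qed
  finally have L: "(\<lambda>n. comp_prefix lam c n 0) \<longlonglongrightarrow> x \<longleftrightarrow> (\<exists>y. p \<longlonglongrightarrow> y \<and> x = lam * y + t)" .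
  show ?thesis
    unfolding is_coding_def L p_def t_def f_eq
    using assms by (subst all_nat_Suc) blast
qed

lemma case_nat_sh: "case_nat (c 0) (\<lambda>k. c (Suc k)) = c"
  by (rule ext) (simp split: nat.split)

lemma inj_case_nat: "inj (case_nat (i::nat) :: (nat \<Rightarrow> nat) \<Rightarrow> _)"
proof (rule injI)
  fix d e :: "nat \<Rightarrow> nat" assume "case_nat i d = case_nat i e"
  then have "case_nat i d (Suc k) = case_nat i e (Suc k)" for k by simp
  then show "d = e" by auto
qed

lemma coding_consI:
  assumes "lam \<noteq> 0" "i \<in> {1..4}" "is_coding lam d y"
  shows "is_coding lam (case_nat i d) (ifs_map lam i y)"
  using assms coding_cons_iff[OF assms(1), of "case_nat i d"] by auto

lemma coding_unique: "is_coding lam c x \<Longrightarrow> is_coding lam c y \<Longrightarrow> x = y"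
  unfolding is_coding_def using LIMSEQ_unique by blast

lemma cp_in:
  assumes "\<And>i y. i \<in> {1..4} \<Longrightarrow> y \<in> S \<Longrightarrow> ifs_map lam i y \<in> S" "\<forall>n. c n \<in> {1..4}"
  shows "y \<in> S \<Longrightarrow> comp_prefix lam c n y \<in> S"
  using assms by (induction n arbitrary: y) auto

lemma coding_in_S:
  assumes lam: "\<bar>lam\<bar> < 1" and S: "closed S" "k \<in> S"
    and f: "\<And>i y. i \<in> {1..4} \<Longrightarrow> y \<in> S \<Longrightarrow> ifs_map lam i y \<in> S"
    and c: "is_coding lam c x"
  shows "x \<in> S"
proof -
  have cn: "\<forall>n. c n \<in> {1..4}" and lim: "(\<lambda>n. comp_prefix lam c n 0) \<longlonglongrightarrow> x"
    using c unfolding is_coding_def by auto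
  have eq: "comp_prefix lam c n k = comp_prefix lam c n 0 + lam^n * k" for n
    using cp_diff[of lam c n k 0] by simp
  have "(\<lambda>n. comp_prefix lam c n 0 + lam^n * k) \<longlonglongrightarrow> x + 0 * k"
    by (intro tendsto_intros lim LIMSEQ_power_zero) (use lam in auto)
  then have "(\<lambda>n. comp_prefix lam c n k) \<longlonglongrightarrow> x" by (simp add: eq)
  moreover have "\<forall>n. comp_prefix lam c n k \<in> S" using cp_in[OF f cn] S by blast
  ultimately show ?thesis using closed_sequentially[OF S(1), of "\<lambda>n. comp_prefix lam c n k" x] by blast
qed

locale ifsl =
  fixes lam :: real
  assumes l0: "0 < lam" and l1: "lam < (5 - sqrt 21) / 2"
begin

lemma lam_facts: "lam < 1/4" "4*lam - lam^2 < 1 - lam" "lam^2 < lam" "lam \<noteq> 0"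
proof -
  have s21: "sqrt 21 * sqrt 21 = 21" by simp
  have "(9/2::real) = sqrt ((9/2)^2)" by simp
  also have "\<dots> < sqrt 21" by (subst real_sqrt_less_iff) (simp add: power2_eq_square)
  finally have g: "9/2 < sqrt 21" .
  show q: "lam < 1/4" using l1 g by simp
  define r where "r = (5 - sqrt 21)/2"
  define r' where "r' = (5 + sqrt 21)/2"
  have "0 < (r - lam) * (r' - lam)" using l1 g unfolding r_def r'_def by (intro mult_pos_pos) auto
  also have "(r - lam) * (r' - lam) = r*r' - lam*(r+r') + lam^2" by (simp add: algebra_simps power2_eq_square)
  also have "r + r' = 5" unfolding r_def r'_def by (simp add: field_simps)
  also have "r * r' = (25 - sqrt 21 * sqrt 21)/4" unfolding r_def r'_def by (simp add: field_simps)
  finally show "4*lam - lam^2 < 1 - lam" using s21 by simp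
  show "lam^2 < lam" using l0 q by (simp add: power2_eq_square)
  show "lam \<noteq> 0" using l0 by simp
qed

lemma maps01: "0 \<le> y \<Longrightarrow> y \<le> 1 \<Longrightarrow> 0 \<le> ifs_map lam i y \<and> ifs_map lam i y \<le> 1"
proof -
  assume y: "0 \<le> y" "y \<le> 1"
  have a: "0 \<le> lam*y" "lam*y \<le> lam" using y l0 by (auto simp: mult_left_le)
  have q: "4*lam < 1" "4*lam - lam^2 < 1 - lam" "lam^2 < lam" using lam_facts by auto
  show ?thesis using a q l0 unfolding f_eq tr_def by (auto; linarith)
qed

lemma coding_01: "is_coding lam c x \<Longrightarrow> 0 \<le> x \<and> x \<le> 1"
  using coding_in_S[of lam "{0..1}" 0 c x] maps01 l0 lam_facts(1) by auto

lemma region: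
  assumes "is_coding lam c x"
  shows "(c 0 = 1 \<longrightarrow> x \<le> lam) \<and> (c 0 \<noteq> 1 \<longrightarrow> 2*lam \<le> x) \<and> (c 0 = 4 \<longrightarrow> 1 - lam \<le> x)
       \<and> (c 0 \<noteq> 4 \<longrightarrow> x < 1 - lam) \<and> (c 0 = 2 \<longrightarrow> x \<le> 3*lam) \<and> (c 0 = 3 \<longrightarrow> 3*lam - lam^2 \<le> x)"
proof -
  obtain y where y: "c 0 \<in> {1..4}" "is_coding lam (\<lambda>k. c (Suc k)) y" "x = ifs_map lam (c 0) y"
    using assms coding_cons_iff lam_facts(4) by blast
  have "0 \<le> y" "y \<le> 1" using coding_01 y(2) by auto
  then have a: "0 \<le> lam*y" "lam*y \<le> lam" using l0 by (auto simp: mult_left_le)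
  have "c 0 = 1 \<or> c 0 = 2 \<or> c 0 = 3 \<or> c 0 = 4" using y(1) by auto
  moreover have q: "4*lam < 1" "4*lam - lam^2 < 1 - lam" "lam^2 < lam" using lam_facts by auto
  ultimately show ?thesis using a q l0 unfolding y(3) f_eq tr_def by (auto; linarith)
qed

definition K0 :: "real set" where "K0 = {x. \<exists>c. is_coding lam c x}"

lemma unique_att:
  assumes K: "compact K" "K \<noteq> {}" "K = (\<Union>i\<in>{1..4}. ifs_map lam i ` K)"
  shows "K = K0"
proof
  show "K0 \<subseteq> K"
  proof
    fix x assume "x \<in> K0"
    then obtain c where c: "is_coding lam c x" unfolding K0_def by auto
    obtain k where "k \<in> K" using K(2) by auto
    show "x \<in> K"
    proof (rule coding_in_S[OF _ _ \<open>k \<in> K\<close> _ c])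
      show "\<bar>lam\<bar> < 1" using l0 lam_facts by simp
      show "closed K" using K(1) compact_imp_closed by blast
      fix i y assume "i \<in> {1..4::nat}" "y \<in> K"
      then show "ifs_map lam i y \<in> K" using K(3) by blast
    qed
  qed
next
  show "K \<subseteq> K0"
  proof
    fix x assume x: "x \<in> K"
    have "\<forall>y\<in>K. \<exists>p. fst p \<in> {1..4} \<and> snd p \<in> K \<and> y = ifs_map lam (fst p) (snd p)"
    proof
      fix y assume "y \<in> K"
      then have "y \<in> (\<Union>i\<in>{1..4}. ifs_map lam i ` K)" using K(3) by simp
      then obtain i z where "i \<in> {1..4}" "z \<in> K" "y = ifs_map lam i z" by blast
      then show "\<exists>p. fst p \<in> {1..4} \<and> snd p \<in> K \<and> y = ifs_map lam (fst p) (snd p)"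
        by (intro exI[of _ "(i,z)"]) simp
    qed
    then obtain g where g: "\<forall>y\<in>K. fst (g y) \<in> {1..4} \<and> snd (g y) \<in> K \<and> y = ifs_map lam (fst (g y)) (snd (g y))"
      by (rule bchoice[elim_format]) blast
    define D where "D y = fst (g y)" for y
    define P where "P y = snd (g y)" for y
    have DP: "\<And>y. y \<in> K \<Longrightarrow> D y \<in> {1..4} \<and> P y \<in> K \<and> y = ifs_map lam (D y) (P y)"
      using g unfolding D_def P_def by blast
    define pts where "pts n = (P ^^ n) x" for n
    define c where "c n = D (pts n)" for n
    have pK: "pts n \<in> K" for n unfolding pts_def by (induction n) (use x DP in auto)
    have cp: "comp_prefix lam c n (pts n) = x" for n
    proof (induction n)
      case 0 then show ?case by (simp add: pts_def)
    next
      case (Suc n)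
      have "comp_prefix lam c (Suc n) (pts (Suc n)) = comp_prefix lam c n (ifs_map lam (c n) (P (pts n)))"
        by (simp add: pts_def)
      also have "ifs_map lam (c n) (P (pts n)) = pts n" using DP[OF pK[of n]] unfolding c_def by simp
      finally show ?case using Suc by simp
    qed
    obtain B where B: "\<And>y. y \<in> K \<Longrightarrow> norm y \<le> B" using K(1) compact_imp_bounded bounded_iff by metis
    have eq: "comp_prefix lam c n 0 = x - lam^n * pts n" for n
      using cp_diff[of lam c n "pts n" 0] cp[of n] by simp
    have "(\<lambda>n. lam^n * pts n) \<longlonglongrightarrow> 0"
    proof (rule Lim_null_comparison)
      show "\<forall>\<^sub>F n in sequentially. norm (lam^n * pts n) \<le> lam^n * B"
        using B pK l0 by (auto simp: abs_mult intro!: mult_left_mono)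
      show "(\<lambda>n. lam^n * B) \<longlonglongrightarrow> 0"
        using LIMSEQ_power_zero[of lam] l0 lam_facts(1) tendsto_mult_left_zero by auto
    qed
    then have "(\<lambda>n. x - lam^n * pts n) \<longlonglongrightarrow> x - 0" by (intro tendsto_intros)
    then have "is_coding lam c x" unfolding is_coding_def eq c_def using DP pK by auto
    then show "x \<in> K0" unfolding K0_def by auto
  qed
qed

definition Fs :: "real set \<Rightarrow> real set" where "Fs S = (\<Union>i\<in>{1..4}. ifs_map lam i ` S)"

lemma exists_att: "\<exists>K. compact K \<and> K \<noteq> {} \<and> K = Fs K"
proof -
  define A where "A n = (Fs ^^ n) {0..1}" for n
  have AS: "A (Suc n) = Fs (A n)" for n by (simp add: A_def)
  have Fmono: "S \<subseteq> T \<Longrightarrow> Fs S \<subseteq> Fs T" for S T unfolding Fs_def by auto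
  have F01: "Fs {0..1} \<subseteq> {0..1}" unfolding Fs_def using maps01 by auto
  have dec: "A (Suc n) \<subseteq> A n" for n
  proof (induction n)
    case 0 then show ?case using F01 by (simp add: A_def)
  next
    case (Suc n) then show ?case using Fmono AS by metis
  qed
  have decs: "decseq A" by (rule decseq_SucI) (use dec in auto)
  have Asub: "A n \<subseteq> {0..1}" for n using decseqD[OF decs, of 0 n] by (simp add: A_def)
  have A0: "0 \<in> A n" for n
  proof (induction n)
    case 0 then show ?case by (simp add: A_def)
  next
    case (Suc n)
    have "ifs_map lam 1 0 = 0" by (simp add: ifs_map_def)
    then show ?case using Suc AS unfolding Fs_def by force
  qed
  have Acomp: "compact (A n)" for n
  proof (induction n)
    case 0 then show ?case by (simp add: A_def)
  next
    case (Suc n)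
    have "compact (Fs (A n))" unfolding Fs_def
    proof (intro compact_UN)
      fix i assume "i \<in> {1..4::nat}"
      have "continuous_on (A n) (ifs_map lam i)" unfolding f_eq by (intro continuous_intros)
      then show "compact (ifs_map lam i ` A n)" using Suc compact_continuous_image by blast
    qed simp
    then show ?case by (simp add: AS)
  qed
  define K where "K = (\<Inter>n. A n)"
  have "K = (\<Inter>n. A n) \<inter> A 0" unfolding K_def by auto
  moreover have "closed (\<Inter>n. A n)" by (intro closed_INT) (use Acomp compact_imp_closed in auto)
  ultimately have Kc: "compact K" using Acomp[of 0] closed_Int_compact by simp
  have Kne: "K \<noteq> {}" using A0 unfolding K_def by auto
  have "K = Fs K"
  proof
    show "Fs K \<subseteq> K"
    proof
      fix x assume "x \<in> Fs K"
      then obtain i y where iy: "i \<in> {1..4}" "y \<in> K" "x = ifs_map lam i y" unfolding Fs_def by auto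
      have "x \<in> A m" for m
      proof -
        have "y \<in> A m" using iy(2) unfolding K_def by auto
        then have "x \<in> Fs (A m)" using iy unfolding Fs_def by auto
        then show ?thesis using AS dec by auto
      qed
      then show "x \<in> K" unfolding K_def by auto
    qed
  next
    show "K \<subseteq> Fs K"
    proof
      fix x assume x: "x \<in> K"
      define y where "y i = (x - tr lam i) / lam" for i
      have fy: "ifs_map lam i (y i) = x" for i using l0 unfolding y_def f_eq by simp
      show "x \<in> Fs K"
      proof (cases "\<exists>i\<in>{1..4}. \<forall>n. y i \<in> A n")
        case True
        then obtain i where "i \<in> {1..4}" "y i \<in> K" unfolding K_def by auto
        then show ?thesis using fy[of i] unfolding Fs_def by force
      next
        case False
        then have "\<forall>i\<in>{1..4}. \<exists>n. y i \<notin> A n" by auto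
        then obtain g where g0: "\<forall>i\<in>{1..4}. y i \<notin> A (g i)" by (rule bchoice[elim_format]) blast
        then have g: "\<And>i. i \<in> {1..4} \<Longrightarrow> y i \<notin> A (g i)" by blast
        define N where "N = Max (g ` {1..4})"
        have "y i \<notin> A N" if "i \<in> {1..4}" for i
        proof
          assume "y i \<in> A N"
          moreover have "g i \<le> N" unfolding N_def using that by auto
          ultimately show False using decseqD[OF decs \<open>g i \<le> N\<close>] g[OF that] by auto
        qed
        moreover have "x \<in> A (Suc N)" using x unfolding K_def by blast
        then have "x \<in> Fs (A N)" using AS by simp
        then obtain j z where "j \<in> {1..4}" "z \<in> A N" "x = ifs_map lam j z" unfolding Fs_def by auto
        moreover have "z = y j" using \<open>x = ifs_map lam j z\<close> l0 unfolding y_def f_eq by simp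
        ultimately show ?thesis by blast
      qed
    qed
  qed
  then show ?thesis using Kc Kne by blast
qed

lemma attractor_eq: "attractor lam = K0"
proof -
  obtain K where K: "compact K" "K \<noteq> {}" "K = Fs K" using exists_att by blast
  have "K = K0" using unique_att K unfolding Fs_def by blast
  then have P: "compact K0 \<and> K0 \<noteq> {} \<and> K0 = (\<Union>i\<in>{1..4}. ifs_map lam i ` K0)"
    using K unfolding Fs_def by blast
  show ?thesis unfolding attractor_def
  proof (rule the_equality)
    show "compact K0 \<and> K0 \<noteq> {} \<and> K0 = (\<Union>i\<in>{1..4}. ifs_map lam i ` K0)" by (rule P)
    fix K' assume "compact K' \<and> K' \<noteq> {} \<and> K' = (\<Union>i\<in>{1..4}. ifs_map lam i ` K')"
    then show "K' = K0" using unique_att by blast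
  qed
qed

lemma U_iff: "1 \<le> k \<Longrightarrow> x \<in> U lam k \<longleftrightarrow> finite (codings lam x) \<and> card (codings lam x) = k"
proof -
  assume k: "1 \<le> k"
  have "finite (codings lam x) \<Longrightarrow> card (codings lam x) = k \<Longrightarrow> \<exists>c. is_coding lam c x"
    using k unfolding codings_def by (metis card.empty ex_in_conv mem_Collect_eq not_one_le_zero)
  moreover have "x \<in> U lam k \<longleftrightarrow> (\<exists>c. is_coding lam c x) \<and> finite (codings lam x) \<and> card (codings lam x) = k"
    unfolding U_def attractor_eq K0_def by simp
  ultimately show ?thesis by blast
qed

end


context ifsl begin

lemma f_inj: "ifs_map lam i y = ifs_map lam i z \<Longrightarrow> y = z"
  using l0 by (simp add: f_eq)

lemma cons_ex:
  assumes "is_coding lam c x"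
  shows "\<exists>y. is_coding lam (\<lambda>k. c (Suc k)) y \<and> x = ifs_map lam (c 0) y"
  using assms coding_cons_iff[OF lam_facts(4)] by blast

lemma coding_01': "is_coding lam c x \<Longrightarrow> 0 \<le> x" "is_coding lam c x \<Longrightarrow> x \<le> 1"
  using coding_01 by auto

lemma cod_f14:
  assumes i: "i = 1 \<or> i = 4" and y: "0 \<le> y" "y \<le> 1"
  shows "codings lam (ifs_map lam i y) = case_nat i ` codings lam y"
proof
  have "i \<in> {1..4}" using i by auto
  then show "case_nat i ` codings lam y \<subseteq> codings lam (ifs_map lam i y)"
    using coding_consI[OF lam_facts(4)] by (auto simp: codings_def)
  show "codings lam (ifs_map lam i y) \<subseteq> case_nat i ` codings lam y"
  proof
    fix d assume "d \<in> codings lam (ifs_map lam i y)"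
    then have dc: "is_coding lam d (ifs_map lam i y)" by (simp add: codings_def)
    obtain z where z: "is_coding lam (\<lambda>k. d (Suc k)) z" "ifs_map lam i y = ifs_map lam (d 0) z"
      using cons_ex[OF dc] by blast
    have ly: "0 \<le> lam*y" "lam*y \<le> lam" using y l0 by (auto simp: mult_left_le)
    have R: "(d 0 = 1 \<longrightarrow> ifs_map lam i y \<le> lam) \<and> (d 0 \<noteq> 1 \<longrightarrow> 2*lam \<le> ifs_map lam i y)
       \<and> (d 0 = 4 \<longrightarrow> 1 - lam \<le> ifs_map lam i y) \<and> (d 0 \<noteq> 4 \<longrightarrow> ifs_map lam i y < 1 - lam)"
      using region[OF dc] by blast
    have "d 0 = i"
    proof (cases "i = 1")
      case True
      then have "ifs_map lam i y \<le> lam" using ly by (simp add: f_eq tr_def)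
      then show ?thesis using R True l0 by auto
    next
      case False
      then have i4: "i = 4" using i by auto
      then have "1 - lam \<le> ifs_map lam i y" using ly by (simp add: f_eq tr_def)
      then show ?thesis using R i4 by auto
    qed
    then have "ifs_map lam i y = ifs_map lam i z" using z(2) by simp
    then have "y = z" by (rule f_inj)
    then have "(\<lambda>k. d (Suc k)) \<in> codings lam y" using z(1) by (simp add: codings_def)
    moreover have "d = case_nat i (\<lambda>k. d (Suc k))" using case_nat_sh[of d] \<open>d 0 = i\<close> by simp
    ultimately show "d \<in> case_nat i ` codings lam y" by (rule rev_image_eqI[where f="case_nat i"])
  qed
qed

lemma f24: "ifs_map lam 2 (ifs_map lam 4 y) = ifs_map lam 3 (ifs_map lam 1 y)"
  by (simp add: f_eq tr_def algebra_simps power2_eq_square)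

lemma cod_f24:
  assumes y: "0 \<le> y" "y \<le> 1"
  shows "codings lam (ifs_map lam 2 (ifs_map lam 4 y))
       = case_nat 2 ` case_nat 4 ` codings lam y \<union> case_nat 3 ` case_nat 1 ` codings lam y"
    (is "codings lam ?x = ?R")
proof
  have y4: "0 \<le> ifs_map lam 4 y" "ifs_map lam 4 y \<le> 1" and y1: "0 \<le> ifs_map lam 1 y" "ifs_map lam 1 y \<le> 1"
    using maps01[OF y] by auto
  show "?R \<subseteq> codings lam ?x"
  proof
    fix e assume "e \<in> ?R"
    then obtain d where d: "is_coding lam d y" and e: "e = case_nat 2 (case_nat 4 d) \<or> e = case_nat 3 (case_nat 1 d)"
      by (auto simp: codings_def)
    have "is_coding lam (case_nat 2 (case_nat 4 d)) ?x"
      by (intro coding_consI[OF lam_facts(4)] d) auto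
    moreover have "is_coding lam (case_nat 3 (case_nat 1 d)) ?x"
      unfolding f24 by (intro coding_consI[OF lam_facts(4)] d) auto
    ultimately show "e \<in> codings lam ?x" using e by (auto simp: codings_def)
  qed
  show "codings lam ?x \<subseteq> ?R"
  proof
    fix d assume "d \<in> codings lam ?x"
    then have dc: "is_coding lam d ?x" by (simp add: codings_def)
    obtain z where z: "is_coding lam (\<lambda>k. d (Suc k)) z" "?x = ifs_map lam (d 0) z"
      using cons_ex[OF dc] by blast
    have xv: "?x = lam^2*y + 3*lam - lam^2" by (simp add: f_eq tr_def algebra_simps power2_eq_square)
    have "0 \<le> lam^2*y" "lam^2*y \<le> lam^2" using y by (auto simp: mult_left_le)
    moreover have "lam^2 < lam" "4*lam < 1" "0 < lam" using lam_facts l0 by auto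
    ultimately have xb: "lam < ?x" "?x < 1 - lam" unfolding xv by linarith+
    have R: "(d 0 = 1 \<longrightarrow> ?x \<le> lam) \<and> (d 0 \<noteq> 4 \<longrightarrow> True) \<and> (d 0 = 4 \<longrightarrow> 1 - lam \<le> ?x)"
      using region[OF dc] by blast
    have "d 0 \<in> {1..4}" using dc unfolding is_coding_def by blast
    then have d23: "d 0 = 2 \<or> d 0 = 3" using R xb by auto
    have dd: "d = case_nat (d 0) (\<lambda>k. d (Suc k))" using case_nat_sh[of d] by simp
    show "d \<in> ?R"
    proof (cases "d 0 = 2")
      case True
      then have "ifs_map lam 2 z = ifs_map lam 2 (ifs_map lam 4 y)" using z(2) by simp
      then have "z = ifs_map lam 4 y" by (rule f_inj)
      then have "(\<lambda>k. d (Suc k)) \<in> case_nat 4 ` codings lam y"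
        using z(1) cod_f14[of 4 y] y by (auto simp: codings_def)
      then have "case_nat 2 (\<lambda>k. d (Suc k)) \<in> case_nat 2 ` case_nat 4 ` codings lam y" by blast
      then show ?thesis using dd True by simp
    next
      case False
      then have d3: "d 0 = 3" using d23 by auto
      then have "ifs_map lam 3 z = ifs_map lam 3 (ifs_map lam 1 y)" using z(2) f24 by simp
      then have "z = ifs_map lam 1 y" by (rule f_inj)
      then have "(\<lambda>k. d (Suc k)) \<in> case_nat 1 ` codings lam y"
        using z(1) cod_f14[of 1 y] y by (auto simp: codings_def)
      then have "case_nat 3 (\<lambda>k. d (Suc k)) \<in> case_nat 3 ` case_nat 1 ` codings lam y" by blast
      then show ?thesis using dd d3 by simp
    qed
  qed
qed

lemma inj_on_cn: "inj_on (case_nat (i::nat)) (S :: (nat \<Rightarrow> nat) set)"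
  using inj_case_nat inj_on_subset by blast

lemma card_two:
  fixes S :: "(nat \<Rightarrow> nat) set"
  assumes "finite S"
  shows "card (case_nat 2 ` case_nat 4 ` S \<union> case_nat 3 ` case_nat 1 ` S) = 2 * card S"
proof -
  have ne: "case_nat 2 f \<noteq> case_nat 3 g" for f g :: "nat \<Rightarrow> nat"
  proof
    assume "case_nat 2 f = case_nat 3 g"
    then have "case_nat 2 f 0 = case_nat 3 g (0::nat)" by simp
    then show False by simp
  qed
  have disj: "case_nat 2 ` case_nat 4 ` S \<inter> case_nat 3 ` case_nat 1 ` S = {}" using ne by blast
  have c1: "card (case_nat 2 ` case_nat 4 ` S) = card S"
    by (simp add: card_image inj_on_cn)
  have c2: "card (case_nat 3 ` case_nat 1 ` S) = card S"
    by (simp add: card_image inj_on_cn)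
  show ?thesis using card_Un_disjoint[OF _ _ disj] assms c1 c2 by simp
qed

lemma finite_two:
  fixes S :: "(nat \<Rightarrow> nat) set"
  assumes "finite (case_nat 2 ` case_nat 4 ` S \<union> case_nat 3 ` case_nat 1 ` S)"
  shows "finite S"
proof -
  have "finite (case_nat 2 ` case_nat 4 ` S)" using assms by simp
  then have "finite (case_nat 4 ` S)" using finite_imageD inj_on_cn by blast
  then show ?thesis using finite_imageD inj_on_cn by blast
qed

lemma U_coded: "y \<in> U lam k \<Longrightarrow> \<exists>c. is_coding lam c y"
  by (simp add: U_def attractor_eq K0_def)

lemma U_01: "y \<in> U lam k \<Longrightarrow> 0 \<le> y \<and> y \<le> 1"
  using U_coded coding_01 by blast

lemma U1_f14:
  assumes i: "i = 1 \<or> i = 4" and y: "0 \<le> y" "y \<le> 1"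
  shows "ifs_map lam i y \<in> U lam 1 \<longleftrightarrow> y \<in> U lam 1"
  using U_iff[of 1] cod_f14[OF assms] by (simp add: finite_image_iff inj_on_cn card_image)

definition T :: "real set" where "T = (\<lambda>y. ifs_map lam 2 (ifs_map lam 4 y)) ` U lam 1"

definition Fw :: "nat list \<Rightarrow> real \<Rightarrow> real" where "Fw w = foldr (\<lambda>i g. ifs_map lam i \<circ> g) w id"

lemma Fw_simps [simp]: "Fw [] = id" "Fw (i # w) = ifs_map lam i \<circ> Fw w"
  by (simp_all add: Fw_def)

lemma T_sub: "T \<subseteq> U lam 2"
proof
  fix x assume "x \<in> T"
  then obtain y where y: "y \<in> U lam 1" "x = ifs_map lam 2 (ifs_map lam 4 y)" unfolding T_def by auto
  have y01: "0 \<le> y" "y \<le> 1" using U_01[OF y(1)] by auto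
  have fy: "finite (codings lam y)" "card (codings lam y) = 1" using y(1) U_iff[of 1] by auto
  show "x \<in> U lam 2"
    unfolding U_iff[of 2, simplified] y(2) cod_f24[OF y01] using fy card_two[OF fy(1)] by simp
qed

lemma C_base:
  assumes c: "is_coding lam c x" and d: "is_coding lam d x" and c0: "c 0 = 2" and d0: "d 0 = 3"
    and fin: "finite (codings lam x)" and cx: "card (codings lam x) = 2"
  shows "x \<in> T"
proof -
  obtain a where a: "is_coding lam (\<lambda>k. c (Suc k)) a" "x = ifs_map lam 2 a"
    using cons_ex[OF c] c0 by auto
  obtain b where b: "is_coding lam (\<lambda>k. d (Suc k)) b" "x = ifs_map lam 3 b"
    using cons_ex[OF d] d0 by auto
  have b0: "0 \<le> b" using coding_01 b(1) by blast
  have "lam*a + 2*lam = lam*b + (3*lam - lam^2)" using a(2) b(2) by (simp add: f_eq tr_def)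
  then have "lam * (a - (b + 1 - lam)) = 0" by (simp add: algebra_simps power2_eq_square)
  then have "a = b + 1 - lam" using l0 by simp
  then have a1: "1 - lam \<le> a" using b0 by simp
  have "c (Suc 0) = 4"
    using region[OF a(1)] a1 by auto
  then obtain y where y: "is_coding lam (\<lambda>k. c (Suc (Suc k))) y" "a = ifs_map lam 4 y"
    using cons_ex[OF a(1)] by auto
  have y01: "0 \<le> y" "y \<le> 1" using coding_01 y(1) by auto
  have xy: "x = ifs_map lam 2 (ifs_map lam 4 y)" using a(2) y(2) by simp
  have E: "codings lam x = case_nat 2 ` case_nat 4 ` codings lam y \<union> case_nat 3 ` case_nat 1 ` codings lam y"
    using cod_f24[OF y01] xy by simp
  have fy: "finite (codings lam y)" using fin unfolding E by (rule finite_two)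
  have "card (codings lam y) = 1" using card_two[OF fy] E cx by simp
  then have "y \<in> U lam 1" using U_iff[of 1] fy by simp
  then show ?thesis unfolding T_def using xy by blast
qed

lemma C_step:
  "\<forall>x c d. is_coding lam c x \<longrightarrow> is_coding lam d x \<longrightarrow> (\<forall>k<n. c k = d k) \<longrightarrow> c n \<noteq> d n
     \<longrightarrow> finite (codings lam x) \<longrightarrow> card (codings lam x) = 2 \<longrightarrow> x \<in> (\<Union>w. Fw w ` T)"
proof (induction n)
  case 0
  show ?case
  proof (intro allI impI)
    fix x c d assume c: "is_coding lam c x" and d: "is_coding lam d x" and ne: "c 0 \<noteq> d 0"
      and fin: "finite (codings lam x)" and cx: "card (codings lam x) = 2"
    have "c 0 \<in> {1..4}" "d 0 \<in> {1..4}" using c d unfolding is_coding_def by blast+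
    moreover have Rc: "(c 0 = 1 \<longrightarrow> x \<le> lam) \<and> (c 0 \<noteq> 1 \<longrightarrow> 2*lam \<le> x) \<and> (c 0 = 4 \<longrightarrow> 1 - lam \<le> x)
       \<and> (c 0 \<noteq> 4 \<longrightarrow> x < 1 - lam)" using region[OF c] by blast
    moreover have Rd: "(d 0 = 1 \<longrightarrow> x \<le> lam) \<and> (d 0 \<noteq> 1 \<longrightarrow> 2*lam \<le> x) \<and> (d 0 = 4 \<longrightarrow> 1 - lam \<le> x)
       \<and> (d 0 \<noteq> 4 \<longrightarrow> x < 1 - lam)" using region[OF d] by blast
    ultimately have "(c 0 = 2 \<and> d 0 = 3) \<or> (c 0 = 3 \<and> d 0 = 2)" using ne l0 by auto
    then have "x \<in> T"
    proof
      assume "c 0 = 2 \<and> d 0 = 3" then show "x \<in> T" using C_base[OF c d _ _ fin cx] by blast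
    next
      assume "c 0 = 3 \<and> d 0 = 2" then show "x \<in> T" using C_base[OF d c _ _ fin cx] by blast
    qed
    then have "x \<in> Fw [] ` T" by simp
    then show "x \<in> (\<Union>w. Fw w ` T)" by blast
  qed
next
  case (Suc m)
  show ?case
  proof (intro allI impI)
    fix x c d assume c: "is_coding lam c x" and d: "is_coding lam d x" and ag: "\<forall>k<Suc m. c k = d k"
      and ne: "c (Suc m) \<noteq> d (Suc m)"
      and fin: "finite (codings lam x)" and cx: "card (codings lam x) = 2"
    have cd0: "c 0 = d 0" using ag by auto
    obtain z where z: "is_coding lam (\<lambda>k. c (Suc k)) z" "x = ifs_map lam (c 0) z"
      using cons_ex[OF c] by blast
    obtain z' where z': "is_coding lam (\<lambda>k. d (Suc k)) z'" "x = ifs_map lam (d 0) z'"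
      using cons_ex[OF d] by blast
    have "ifs_map lam (c 0) z' = ifs_map lam (c 0) z" using z(2) z'(2) cd0 by simp
    then have "z' = z" by (rule f_inj)
    have ci: "c 0 \<in> {1..4}" using c unfolding is_coding_def by blast
    have sub: "case_nat (c 0) ` codings lam z \<subseteq> codings lam x"
      using coding_consI[OF lam_facts(4) ci] z(2) by (auto simp: codings_def)
    have finz: "finite (codings lam z)"
      using finite_subset[OF sub fin] finite_imageD inj_on_cn by blast
    have "card (codings lam z) \<le> 2"
      using card_mono[OF fin sub] cx by (simp add: card_image inj_on_cn)
    moreover have "{(\<lambda>k. c (Suc k)), (\<lambda>k. d (Suc k))} \<subseteq> codings lam z"
      using z(1) z'(1) \<open>z' = z\<close> by (auto simp: codings_def)
    moreover have "(\<lambda>k. c (Suc k)) \<noteq> (\<lambda>k. d (Suc k))" using ne by (auto dest: fun_cong[of _ _ m])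
    then have "card {(\<lambda>k. c (Suc k)), (\<lambda>k. d (Suc k))} = 2" by simp
    ultimately have cz: "card (codings lam z) = 2"
      using card_mono[OF finz, of "{(\<lambda>k. c (Suc k)), (\<lambda>k. d (Suc k))}"] by linarith
    have "\<forall>k<m. c (Suc k) = d (Suc k)" using ag by auto
    moreover have zd: "is_coding lam (\<lambda>k. d (Suc k)) z" using z'(1) \<open>z' = z\<close> by simp
    ultimately have "z \<in> (\<Union>w. Fw w ` T)"
      using Suc.IH[rule_format, OF z(1) zd _ _ finz cz] ne by blast
    then obtain w t where "t \<in> T" "z = Fw w t" by blast
    then have "x = Fw (c 0 # w) t" using z(2) by simp
    then show "x \<in> (\<Union>w. Fw w ` T)" using \<open>t \<in> T\<close> by blast
  qed
qed

lemma U2_sub: "U lam 2 \<subseteq> (\<Union>w. Fw w ` T)"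
proof
  fix x assume "x \<in> U lam 2"
  then have fin: "finite (codings lam x)" and cx: "card (codings lam x) = 2" using U_iff[of 2] by auto
  then obtain c d where cd: "codings lam x = {c, d}" "c \<noteq> d" by (metis card_2_iff)
  then have c: "is_coding lam c x" and d: "is_coding lam d x" by (auto simp: codings_def)
  have "\<exists>k. c k \<noteq> d k" using cd(2) by (auto simp: fun_eq_iff)
  define n where "n = (LEAST k. c k \<noteq> d k)"
  have ne: "c n \<noteq> d n" unfolding n_def by (rule LeastI_ex) (rule \<open>\<exists>k. c k \<noteq> d k\<close>)
  have ag: "\<forall>k<n. c k = d k" unfolding n_def using not_less_Least by blast
  show "x \<in> (\<Union>w. Fw w ` T)" using C_step[of n, rule_format, OF c d ag[rule_format] ne fin cx] .
qed

lemma f_null: "0 < s \<Longrightarrow> hausdorff_measure s S = 0 \<Longrightarrow> hausdorff_measure s (ifs_map lam i ` S) = 0"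
proof -
  assume "0 < s" "hausdorff_measure s S = 0"
  moreover have "ifs_map lam i = (\<lambda>x. lam*x + tr lam i)" by (rule ext) (simp add: f_eq)
  ultimately show ?thesis using hm_affine_null[of s lam S] l0 by simp
qed

lemma Fw_null: "0 < s \<Longrightarrow> hausdorff_measure s S = 0 \<Longrightarrow> hausdorff_measure s (Fw w ` S) = 0"
proof (induction w)
  case Nil then show ?case by simp
next
  case (Cons i w)
  have "Fw (i # w) ` S = ifs_map lam i ` (Fw w ` S)" by (simp add: image_comp)
  then show ?case using f_null Cons by simp
qed

lemma W_eqs:
  shows "U lam 1 \<inter> (\<lambda>x. x + 1 - lam) ` U lam 1 = {x \<in> U lam 1. \<exists>c. is_coding lam c x \<and> c 0 = 4}"
    and "U lam 1 \<inter> (\<lambda>x. x + 1 - lam) ` U lam 1 = ifs_map lam 4 ` U lam 1"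
proof -
  let ?W = "U lam 1 \<inter> (\<lambda>x. x + 1 - lam) ` U lam 1"
  let ?R = "{x \<in> U lam 1. \<exists>c. is_coding lam c x \<and> c 0 = 4}"
  have 1: "?W \<subseteq> ?R"
  proof
    fix x assume "x \<in> ?W"
    then obtain y where x: "x \<in> U lam 1" and y: "y \<in> U lam 1" "x = y + 1 - lam" by auto
    have "1 - lam \<le> x" using U_01[OF y(1)] y(2) by simp
    obtain c where c: "is_coding lam c x" using U_coded[OF x] by blast
    have "c 0 = 4" using region[OF c] \<open>1 - lam \<le> x\<close> by auto
    then show "x \<in> ?R" using x c by blast
  qed
  have 2: "?R \<subseteq> ifs_map lam 4 ` U lam 1"
  proof
    fix x assume "x \<in> ?R"
    then obtain c where x: "x \<in> U lam 1" and c: "is_coding lam c x" "c 0 = 4" by blast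
    obtain z where z: "is_coding lam (\<lambda>k. c (Suc k)) z" "x = ifs_map lam 4 z"
      using cons_ex[OF c(1)] c(2) by auto
    have z01: "0 \<le> z" "z \<le> 1" using coding_01 z(1) by auto
    have "z \<in> U lam 1" using U1_f14[of 4 z] z01 x z(2) by simp
    then show "x \<in> ifs_map lam 4 ` U lam 1" using z(2) by blast
  qed
  have 3: "ifs_map lam 4 ` U lam 1 \<subseteq> ?W"
  proof
    fix x assume "x \<in> ifs_map lam 4 ` U lam 1"
    then obtain z where z: "z \<in> U lam 1" "x = ifs_map lam 4 z" by blast
    have z01: "0 \<le> z" "z \<le> 1" using U_01[OF z(1)] by auto
    have "x \<in> U lam 1" using U1_f14[of 4 z] z01 z by simp
    moreover have "ifs_map lam 1 z \<in> U lam 1" using U1_f14[of 1 z] z01 z by simp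
    moreover have "x = ifs_map lam 1 z + 1 - lam" using z(2) by (simp add: f_eq tr_def)
    ultimately show "x \<in> ?W" by blast
  qed
  show "?W = ?R" using 1 2 3 by blast
  show "?W = ifs_map lam 4 ` U lam 1" using 1 2 3 by blast
qed

lemma inv_image_affine:
  fixes g :: "real \<Rightarrow> real"
  assumes "\<And>x. a * g x + b = x"
  shows "S = (\<lambda>x. a*x + b) ` (g ` S)"
proof -
  have "(\<lambda>x. a*x + b) ` (g ` S) = (\<lambda>x. a * g x + b) ` S" by (simp add: image_image)
  also have "\<dots> = S" using assms by simp
  finally show ?thesis by simp
qed

lemma null_equiv_f4:
  "0 < s \<Longrightarrow> hausdorff_measure s (ifs_map lam 4 ` U lam 1) = 0 \<longleftrightarrow> hausdorff_measure s (U lam 1) = 0"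
proof
  assume s: "0 < s" and h: "hausdorff_measure s (ifs_map lam 4 ` U lam 1) = 0"
  have e: "U lam 1 = (\<lambda>x. (1/lam)*x + (-(1-lam)/lam)) ` (ifs_map lam 4 ` U lam 1)"
    by (rule inv_image_affine) (use l0 in \<open>simp add: f_eq tr_def field_simps\<close>)
  show "hausdorff_measure s (U lam 1) = 0"
    by (subst e, rule hm_affine_null[OF s _ h]) (use l0 in simp)
next
  assume "0 < s" "hausdorff_measure s (U lam 1) = 0"
  then show "hausdorff_measure s (ifs_map lam 4 ` U lam 1) = 0" by (rule f_null)
qed

lemma null_equiv_U2:
  assumes s: "0 < s"
  shows "hausdorff_measure s (U lam 2) = 0 \<longleftrightarrow> hausdorff_measure s (U lam 1) = 0"
proof
  assume h: "hausdorff_measure s (U lam 2) = 0"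
  have hT: "hausdorff_measure s T = 0" using hm_null_subset[OF T_sub h] .
  have e: "U lam 1 = (\<lambda>x. (1/lam^2)*x + (-(3*lam - lam^2)/lam^2)) ` T"
    unfolding T_def
    by (rule inv_image_affine) (use l0 in \<open>simp add: f_eq tr_def field_simps power2_eq_square\<close>)
  show "hausdorff_measure s (U lam 1) = 0"
    by (subst e, rule hm_affine_null[OF s _ hT]) (use l0 in simp)
next
  assume h: "hausdorff_measure s (U lam 1) = 0"
  have hT: "hausdorff_measure s T = 0"
    unfolding T_def image_image[symmetric, of "ifs_map lam 2" "ifs_map lam 4"]
    by (intro f_null s h)
  have "hausdorff_measure s (\<Union>n. Fw (from_nat n) ` T) = 0"
    by (rule hm_UN_null) (rule Fw_null[OF s hT])
  moreover have "(\<Union>w. Fw w ` T) = (\<Union>n. Fw (from_nat n) ` T)"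
  proof (intro equalityI subsetI)
    fix x assume "x \<in> (\<Union>w. Fw w ` T)"
    then obtain w where "x \<in> Fw w ` T" by blast
    then have "x \<in> Fw (from_nat (to_nat w)) ` T" by simp
    then show "x \<in> (\<Union>n. Fw (from_nat n) ` T)" by blast
  qed auto
  ultimately show "hausdorff_measure s (U lam 2) = 0"
    using hm_null_subset[OF U2_sub] by simp
qed

end

theorem lemma2p26:
  fixes lam :: real
  assumes "0 < lam" and "lam < (5 - sqrt 21) / 2"
  shows "hausdorff_dim (U lam 2) = hausdorff_dim (U lam 1 \<inter> (\<lambda>x. x + 1 - lam) ` U lam 1)
       \<and> hausdorff_dim (U lam 1 \<inter> (\<lambda>x. x + 1 - lam) ` U lam 1) = hausdorff_dim (U lam 1)
       \<and> U lam 1 \<inter> (\<lambda>x. x + 1 - lam) ` U lam 1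
           = {x \<in> U lam 1. \<exists>c. is_coding lam c x \<and> c 0 = 4}"
proof -
  interpret ifsl lam using assms by unfold_locales
  have Z1: "{s. 0 < s \<and> hausdorff_measure s (U lam 1 \<inter> (\<lambda>x. x + 1 - lam) ` U lam 1) = 0}
          = {s. 0 < s \<and> hausdorff_measure s (U lam 1) = 0}"
    using W_eqs(2) null_equiv_f4 by auto
  have Z2: "{s. 0 < s \<and> hausdorff_measure s (U lam 2) = 0}
          = {s. 0 < s \<and> hausdorff_measure s (U lam 1) = 0}"
    using null_equiv_U2 by auto
  show ?thesis unfolding hausdorff_dim_def using Z1 Z2 W_eqs(1) by simp
qed

end
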